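(* Let $E_1$, $E_2$ be para-Hilbert spaces and $A=(X_A,H_A,Y_A)\colon E_1\to E_2$ a morphism. Define $X_A^*:=J_{E_1}^{-1}\,Y_A'\,J_{E_2}$. Then $X_A^*$ is a continuous linear operator from $X_{E_2}$ to $X_{E_1}$ and $g_{E_1}(X_A^*u_2,u_1)=g_{E_2}(u_2,X_Au_1)$ for all $u_1\in X_{E_1}$ and $u_2\in X_{E_2}$.
   Context: A para-Hilbert space $E$ consists of Banach spaces $X_E,Y_E$, a Hilbert space $H_E$ with inner product $\langle\cdot,\cdot\rangle_{H_E}$ and Riesz isomorphism $I_E\colon H_E\to H_E'$, bounded linear injections with dense image $i_E\colon X_E\to H_E$, $j_E\colon H_E\to Y_E$, and an isomorphism of Banach spaces $J_E\colon X_E\to Y_E'$ such that $j_E'\circ J_E=I_E\circ i_E$ ($'$ denotes duals and dual operators). Its pre-Hilbert metric is $g_E(x_1,x_2)=\langle i_Ex_1,i_Ex_2\rangle_{H_E}$ for $x_1,x_2\in X_E$. A morphism $A\colon E_1\to E_2$ is a triple of bounded linear operators $X_A\colon X_{E_1}\to X_{E_2}$, $H_A\colon H_{E_1}\to H_{E_2}$, $Y_A\colon Y_{E_1}\to Y_{E_2}$ with $i_{E_2}X_A=H_Ai_{E_1}$ and $j_{E_2}H_A=Y_Aj_{E_1}$. *)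

theory Defs
  imports "HOL-Analysis.Analysis"
begin

definition dual_op :: "('a::real_normed_vector \<Rightarrow> 'b::real_normed_vector)
    \<Rightarrow> ('b \<Rightarrow>\<^sub>L real) \<Rightarrow> ('a \<Rightarrow>\<^sub>L real)" where
  "dual_op T = (\<lambda>\<phi>. Blinfun (\<lambda>a. blinfun_apply \<phi> (T a)))"

definition riesz :: "'h::real_inner \<Rightarrow> ('h \<Rightarrow>\<^sub>L real)" where
  "riesz h = Blinfun (\<lambda>k. inner h k)"

definition banach_iso :: "('a::real_normed_vector \<Rightarrow> 'b::real_normed_vector) \<Rightarrow> bool" where
  "banach_iso f \<longleftrightarrow> bounded_linear f \<and> bij f \<and> bounded_linear (inv f)"

text \<open>Para-Hilbert space (X, H, Y, i, j, J): X, Y Banach spaces (types of class banach),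
  H a real Hilbert space (type of class real_inner + complete_space).\<close>
definition para_hilbert ::
  "('x::banach \<Rightarrow> 'h::{real_inner,complete_space}) \<Rightarrow> ('h \<Rightarrow> 'y::banach)
     \<Rightarrow> ('x \<Rightarrow> ('y \<Rightarrow>\<^sub>L real)) \<Rightarrow> bool" where
  "para_hilbert i j J \<longleftrightarrow>
     bounded_linear i \<and> inj i \<and> closure (range i) = UNIV \<and>
     bounded_linear j \<and> inj j \<and> closure (range j) = UNIV \<and>
     banach_iso J \<and>
     (\<forall>x. dual_op j (J x) = riesz (i x))"

definition phmetric :: "('x \<Rightarrow> 'h::real_inner) \<Rightarrow> 'x \<Rightarrow> 'x \<Rightarrow> real" where
  "phmetric i x1 x2 = inner (i x1) (i x2)"

definition ph_morphism ::
  "('x1::banach \<Rightarrow> 'h1::{real_inner,complete_space}) \<Rightarrow> ('h1 \<Rightarrow> 'y1::banach)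
   \<Rightarrow> ('x2::banach \<Rightarrow> 'h2::{real_inner,complete_space}) \<Rightarrow> ('h2 \<Rightarrow> 'y2::banach)
   \<Rightarrow> ('x1 \<Rightarrow> 'x2) \<Rightarrow> ('h1 \<Rightarrow> 'h2) \<Rightarrow> ('y1 \<Rightarrow> 'y2) \<Rightarrow> bool" where
  "ph_morphism i1 j1 i2 j2 XA HA YA \<longleftrightarrow>
     bounded_linear XA \<and> bounded_linear HA \<and> bounded_linear YA \<and>
     (\<forall>x. i2 (XA x) = HA (i1 x)) \<and> (\<forall>h. j2 (HA h) = YA (j1 h))"

end

theory Submission
  imports Defs
begin

lemma dual_op_eq:
  assumes "bounded_linear T"
  shows "dual_op T \<phi> = \<phi> o\<^sub>L Blinfun T"
proof -
  have "bounded_linear (\<lambda>a. blinfun_apply \<phi> (T a))"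
    using bounded_linear_compose[OF blinfun.bounded_linear_right assms, of \<phi>] by simp
  thus ?thesis unfolding dual_op_def
    by (intro blinfun_eqI) (simp add: bounded_linear_Blinfun_apply assms)
qed

lemma dual_op_apply:
  assumes "bounded_linear T"
  shows "blinfun_apply (dual_op T \<phi>) a = blinfun_apply \<phi> (T a)"
  using dual_op_eq[OF assms] by (simp add: bounded_linear_Blinfun_apply assms)

lemma dual_op_bl:
  assumes "bounded_linear T"
  shows "bounded_linear (dual_op T)"
proof -
  have "dual_op T = (\<lambda>\<phi>. \<phi> o\<^sub>L Blinfun T)" using dual_op_eq[OF assms] by blast
  thus ?thesis using bounded_bilinear.bounded_linear_left[OF bounded_bilinear_blinfun_compose] by simp
qed

lemma riesz_apply: "blinfun_apply (riesz h) k = inner h k"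
  unfolding riesz_def
  by (simp add: bounded_linear_Blinfun_apply bounded_linear_inner_right)

theorem proposition2p10:
  fixes i1 :: "'x1::banach \<Rightarrow> 'h1::{real_inner,complete_space}"
    and j1 :: "'h1 \<Rightarrow> 'y1::banach"
    and J1 :: "'x1 \<Rightarrow> ('y1 \<Rightarrow>\<^sub>L real)"
    and i2 :: "'x2::banach \<Rightarrow> 'h2::{real_inner,complete_space}"
    and j2 :: "'h2 \<Rightarrow> 'y2::banach"
    and J2 :: "'x2 \<Rightarrow> ('y2 \<Rightarrow>\<^sub>L real)"
    and XA :: "'x1 \<Rightarrow> 'x2" and HA :: "'h1 \<Rightarrow> 'h2" and YA :: "'y1 \<Rightarrow> 'y2"
  assumes "para_hilbert i1 j1 J1"
    and "para_hilbert i2 j2 J2"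
    and "ph_morphism i1 j1 i2 j2 XA HA YA"
  defines "XAstar \<equiv> inv J1 \<circ> dual_op YA \<circ> J2"
  shows "bounded_linear XAstar \<and>
         (\<forall>u1 u2. phmetric i1 (XAstar u2) u1 = phmetric i2 u2 (XA u1))"
proof
  have p1: "bounded_linear j1" "banach_iso J1" "\<And>x. dual_op j1 (J1 x) = riesz (i1 x)"
    using assms(1) unfolding para_hilbert_def by auto
  have p2: "bounded_linear j2" "banach_iso J2" "\<And>x. dual_op j2 (J2 x) = riesz (i2 x)"
    using assms(2) unfolding para_hilbert_def by auto
  have m: "bounded_linear YA" "\<And>x. i2 (XA x) = HA (i1 x)" "\<And>h. j2 (HA h) = YA (j1 h)"
    using assms(3) unfolding ph_morphism_def by auto
  show "bounded_linear XAstar" unfolding XAstar_def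
    using p1(2) p2(2) dual_op_bl[OF m(1)] unfolding banach_iso_def
    by (intro bounded_linear_compose[unfolded o_def[symmetric]] ) auto
  show "\<forall>u1 u2. phmetric i1 (XAstar u2) u1 = phmetric i2 u2 (XA u1)"
  proof (intro allI)
    fix u1 u2
    have JJ: "J1 (XAstar u2) = dual_op YA (J2 u2)"
      using p1(2) unfolding banach_iso_def XAstar_def by (simp add: bij_is_surj surj_f_inv_f)
    have "phmetric i1 (XAstar u2) u1 = blinfun_apply (riesz (i1 (XAstar u2))) (i1 u1)"
      by (simp add: phmetric_def riesz_apply)
    also have "\<dots> = blinfun_apply (J1 (XAstar u2)) (j1 (i1 u1))"
      by (simp add: p1(3)[symmetric] dual_op_apply p1(1))
    also have "\<dots> = blinfun_apply (J2 u2) (YA (j1 (i1 u1)))"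
      by (simp add: JJ dual_op_apply m(1))
    also have "\<dots> = blinfun_apply (dual_op j2 (J2 u2)) (i2 (XA u1))"
      by (simp add: dual_op_apply p2(1) m(2,3))
    also have "\<dots> = phmetric i2 u2 (XA u1)"
      by (simp add: p2(3) riesz_apply phmetric_def)
    finally show "phmetric i1 (XAstar u2) u1 = phmetric i2 u2 (XA u1)" .
  qed
qed

end
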